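(* Let $C$ be a hyperelliptic curve of genus $3$ over $\mathbb{C}$ given by $y^2=f(x)$ with $f$ a separable polynomial of degree $8$. Denote by $\alpha_1,\dots,\alpha_8$ the roots of $f$ and by $R_i=(\alpha_i,0)$ the corresponding branch points; for $w\in\mathbb{C}$ with $f(w)\neq 0$ let $P_1^w,P_2^w$ be the two points of $C$ over $x=w$. Then: (1) For $q=1$ and any $\beta\in\mathbb{C}$, the set $B_{1,\beta}=\left\{\frac{(x-\beta)^j}{y}\,dx : 0\le j\le 2\right\}$ is a basis of $H^0(C,(\Omega^1)^1)$. (2) For $q=2$, any $\beta\in\mathbb{C}$ and $m\in\{1,2\}$, the set $B_{2,\beta}=\left\{\frac{(x-\beta)^j}{y^2}(dx)^2 : 0\le j\le 4\right\}\cup\left\{\frac{y-f_{\beta,4,m}(x)}{y^2}(dx)^2\right\}$ is a basis of $H^0(C,(\Omega^1)^2)$, where $f_{\beta,4,m}(x)=0$ if $\beta$ is a root of $f$, and if $\beta=w$ is not a root of $f$ then $f_{w,4,m}(x)$ is the degree-$4$ Taylor polynomial at $x=w$ of the local branch of $y$ (as a function of $x$) through $P_m^w$. (3) For every $q\ge 2$ and every root $\beta$ of $f$, the set $B_{q,\beta}=\left\{\frac{(x-\beta)^j}{y^q}(dx)^q : 0\le j\le 2q\right\}\cup\left\{\frac{(x-\beta)^j y}{y^q}(dx)^q : 0\le j\le 2q-4\right\}$ is a basis of $H^0(C,(\Omega^1)^q)$.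
   Context: $H^0(C,(\Omega^1)^q)$ denotes the complex vector space of holomorphic $q$-differentials on the (smooth projective model of the) curve $C$; for genus $3$ its dimension is $3$ if $q=1$ and $2(2q-1)$ if $q\ge 2$. *)

theory Defs
  imports "HOL-Computational_Algebra.Computational_Algebra"
begin

text \<open>An element of the function field
  of C: y^2 = f(x) is represented as a pair (A, B) meaning A(x) + B(x) y.
  A meromorphic q-differential is g (dx)^q with g in the function field.\<close>

type_synonym ratfun = "complex poly fract"
type_synonym ffelem = "ratfun \<times> ratfun"

definition ratfun_of_poly :: "complex poly \<Rightarrow> ratfun" where
  "ratfun_of_poly p = Fract p 1"

definition eval_ratfun :: "ratfun \<Rightarrow> complex fls \<Rightarrow> complex fls" where
  "eval_ratfun A X = (let (n, d) = (SOME (n, d). d \<noteq> 0 \<and> A = Fract n d) in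
      poly (map_poly fls_const n) X / poly (map_poly fls_const d) X)"

definition eval_ff :: "ffelem \<Rightarrow> complex fls \<Rightarrow> complex fls \<Rightarrow> complex fls" where
  "eval_ff g X Y = eval_ratfun (fst g) X + eval_ratfun (snd g) X * Y"

text \<open>Local parametrisations (by a uniformiser t) of the points of the smooth projective
  model of y^2 = f(x), f of even degree 2g+2 without repeated roots:
  non-branch affine points (x = a + t, y a branch of sqrt(f)),
  branch points (x = alpha + t^2), and the two points at infinity (x = 1/t).\<close>
definition curve_places :: "complex poly \<Rightarrow> (complex fls \<times> complex fls) set" where
  "curve_places f =
     {(X, Y). Y\<^sup>2 = poly (map_poly fls_const f) X \<and>
        ((\<exists>a. poly f a \<noteq> 0 \<and> X = fls_const a + fls_X) \<or>
         (\<exists>a. poly f a = 0 \<and> X = fls_const a + fls_X\<^sup>2) \<or>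
         X = fls_X_inv)}"

definition holo_qdiff :: "complex poly \<Rightarrow> nat \<Rightarrow> ffelem \<Rightarrow> bool" where
  "holo_qdiff f q g \<longleftrightarrow>
     (\<forall>(X, Y) \<in> curve_places f.
        let h = eval_ff g X Y * (fls_deriv X) ^ q in h = 0 \<or> fls_subdegree h \<ge> 0)"

definition ff_scale :: "complex \<Rightarrow> ffelem \<Rightarrow> ffelem" where
  "ff_scale c g = (ratfun_of_poly [:c:] * fst g, ratfun_of_poly [:c:] * snd g)"

definition ff_lincomb :: "(nat \<Rightarrow> complex) \<Rightarrow> (nat \<Rightarrow> ffelem) \<Rightarrow> nat \<Rightarrow> ffelem" where
  "ff_lincomb c b n = (\<Sum>i<n. fst (ff_scale (c i) (b i)), \<Sum>i<n. snd (ff_scale (c i) (b i)))"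

definition is_basis_H0 :: "complex poly \<Rightarrow> nat \<Rightarrow> nat \<Rightarrow> (nat \<Rightarrow> ffelem) \<Rightarrow> bool" where
  "is_basis_H0 f q n b \<longleftrightarrow>
     (\<forall>i<n. holo_qdiff f q (b i)) \<and>
     (\<forall>c. ff_lincomb c b n = (0, 0) \<longrightarrow> (\<forall>i<n. c i = 0)) \<and>
     (\<forall>g. holo_qdiff f q g \<longrightarrow> (\<exists>c. g = ff_lincomb c b n))"

definition xb :: "complex \<Rightarrow> ratfun" where
  "xb \<beta> = ratfun_of_poly [:-\<beta>, 1:]"

definition y_inv_pow :: "complex poly \<Rightarrow> nat \<Rightarrow> ffelem" where
  "y_inv_pow f q = (if even q then (inverse (ratfun_of_poly f) ^ (q div 2), 0)
                    else (0, inverse (ratfun_of_poly f) ^ ((q + 1) div 2)))"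

definition ff_mult :: "complex poly \<Rightarrow> ffelem \<Rightarrow> ffelem \<Rightarrow> ffelem" where
  "ff_mult f g h = (fst g * fst h + ratfun_of_poly f * snd g * snd h,
                    fst g * snd h + snd g * fst h)"

text \<open>Degree-4 Taylor polynomial at x = w of a local branch Y (in t = x - w) of y.\<close>
definition taylor4 :: "complex \<Rightarrow> complex fls \<Rightarrow> complex poly" where
  "taylor4 w Y = (\<Sum>k\<le>4. smult (fls_nth Y (int k)) ([:-w, 1:] ^ k))"

end

theory Submission
  imports Defs "HOL-Computational_Algebra.Field_as_Ring"
begin

definition ev :: "complex poly \<Rightarrow> complex fls \<Rightarrow> complex fls" where
  "ev p X = poly (map_poly fls_const p) X"

lemma ev_pCons: "ev (pCons a p) X = fls_const a + X * ev p X"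
  by (simp add: ev_def map_poly_pCons)

lemma ev_0[simp]: "ev 0 X = 0" by (simp add: ev_def)

lemma ev_const[simp]: "ev [:c:] X = fls_const c"
  by (simp add: ev_pCons)

lemma ev_add: "ev (p + q) X = ev p X + ev q X"
proof (induct p arbitrary: q rule: pCons_induct)
  case 0 then show ?case by simp
next
  case (pCons a p)
  show ?case
  proof (cases q rule: pCons_cases)
    case (pCons b q')
    then show ?thesis using pCons.hyps(2)[of q']
      by (simp add: ev_pCons algebra_simps flip: fls_plus_const)
  qed
qed

lemma ev_smult: "ev (smult a p) X = fls_const a * ev p X"
  by (induct p rule: pCons_induct) (auto simp: ev_pCons algebra_simps)

lemma ev_mult: "ev (p * q) X = ev p X * ev q X"
  by (induct p rule: pCons_induct) (auto simp: ev_pCons ev_add ev_smult algebra_simps)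

lemma ev_1[simp]: "ev 1 X = 1"
  using ev_const[of 1 X] by (simp add: one_pCons)

lemma ev_power: "ev (p ^ n) X = ev p X ^ n"
  by (induct n) (auto simp: ev_mult)

lemma ev_uminus: "ev (- p) X = - ev p X"
  using ev_smult[of "-1" p X] by simp

lemma ev_diff: "ev (p - q) X = ev p X - ev q X"
  using ev_add[of p "-q" X] by (simp add: ev_uminus)

lemma ev_lin: "ev [:a, 1:] X = fls_const a + X"
  by (simp add: ev_pCons)

lemma ev_sum: "ev (sum g A) X = (\<Sum>i\<in>A. ev (g i) X)"
  by (induct A rule: infinite_finite_induct) (auto simp: ev_add)

definition fpoly :: "complex poly \<Rightarrow> complex fps \<Rightarrow> complex fps" where
  "fpoly p F = poly (map_poly fps_const p) F"

lemma ev_fps: "ev p (fps_to_fls F) = fps_to_fls (fpoly p F)"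
  by (induct p rule: pCons_induct)
     (auto simp: ev_pCons fpoly_def map_poly_pCons fls_times_fps_to_fls)

lemma fpoly_nth0: "fpoly p F $ 0 = poly p (F $ 0)"
  by (induct p rule: pCons_induct) (auto simp: fpoly_def map_poly_pCons)

lemma ev_at_gen:
  assumes "p \<noteq> 0" "G $ 0 = 0" "G \<noteq> 0"
  shows "ev p (fps_to_fls (fps_const a + G)) \<noteq> 0 \<and>
         fls_subdegree (ev p (fps_to_fls (fps_const a + G))) = int (order a p * subdegree G)"
proof -
  define m where "m = order a p"
  obtain r where r: "p = [:-a,1:]^m * r" "\<not> [:-a,1:] dvd r"
    using order_decomp[OF assms(1)] unfolding m_def by blast
  have ra: "poly r a \<noteq> 0" using r(2) poly_eq_0_iff_dvd by blast
  have e1: "ev [:-a,1:] (fps_to_fls (fps_const a + G)) = fps_to_fls G"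
    by (simp add: ev_lin)
  define R where "R = fpoly r (fps_const a + G)"
  have R0: "R $ 0 = poly r a" using assms(2) by (simp add: R_def fpoly_nth0)
  have er: "ev r (fps_to_fls (fps_const a + G)) = fps_to_fls R" unfolding R_def by (rule ev_fps)
  have R00: "R \<noteq> 0" using R0 ra by auto
  have eq: "ev p (fps_to_fls (fps_const a + G)) = fps_to_fls G ^ m * fps_to_fls R"
    by (subst r(1)) (simp only: ev_mult ev_power e1 er)
  have G0: "fps_to_fls G \<noteq> 0" using assms(3) by simp
  have "fls_subdegree (fps_to_fls G ^ m * fps_to_fls R) = int (m * subdegree G)"
    using G0 R00 R0 ra by (simp add: fls_subdegree_pow fls_subdegree_fls_to_fps)
  then show ?thesis using eq G0 R00 by (simp add: m_def)
qed

lemma ev_pt: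
  assumes "p \<noteq> 0"
  shows "ev p (fls_const a + fls_X) \<noteq> 0 \<and> fls_subdegree (ev p (fls_const a + fls_X)) = int (order a p)"
  using ev_at_gen[OF assms, of "fps_X" a] by simp

lemma ev_br:
  assumes "p \<noteq> 0"
  shows "ev p (fls_const a + fls_X\<^sup>2) \<noteq> 0 \<and> fls_subdegree (ev p (fls_const a + fls_X\<^sup>2)) = 2 * int (order a p)"
  using ev_at_gen[OF assms, of "fps_X^2" a] by (simp add: fps_to_fls_power)

lemma ev_inf:
  assumes "p \<noteq> 0"
  shows "ev p fls_X_inv \<noteq> 0 \<and> fls_subdegree (ev p fls_X_inv) = - int (degree p)"
  using assms
proof (induct p rule: pCons_induct)
  case 0 then show ?case by simp
next
  case (pCons a r)
  show ?case
  proof (cases "r = 0")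
    case True
    then show ?thesis using pCons by (simp add: ev_pCons)
  next
    case False
    with pCons.hyps(2) have ih: "ev r fls_X_inv \<noteq> 0" "fls_subdegree (ev r fls_X_inv) = - int (degree r)" by auto
    have nz: "fls_X_inv * ev r fls_X_inv \<noteq> 0" using ih by simp
    have sd: "fls_subdegree (fls_X_inv * ev r fls_X_inv) = - 1 - int (degree r)"
      using ih nz by simp
    have "fls_subdegree (fls_const a + fls_X_inv * ev r fls_X_inv) = - 1 - int (degree r)"
      using fls_subdegree_add_eq2[OF nz, of "fls_const a"] sd by simp
    moreover have "fls_const a + fls_X_inv * ev r fls_X_inv \<noteq> 0"
    proof
      assume "fls_const a + fls_X_inv * ev r fls_X_inv = 0"
      then have "fls_subdegree (fls_const a + fls_X_inv * ev r fls_X_inv) = 0" by simp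
      with calculation show False by simp
    qed
    ultimately show ?thesis using False by (simp add: ev_pCons)
  qed
qed

definition good :: "complex fls \<Rightarrow> bool" where
  "good X \<longleftrightarrow> (\<forall>p. p \<noteq> 0 \<longrightarrow> ev p X \<noteq> 0)"

lemma eval_Fract:
  assumes "good X" "d \<noteq> 0"
  shows "eval_ratfun (Fract n d) X = ev n X / ev d X"
proof -
  define pr where "pr = (SOME x. snd x \<noteq> 0 \<and> Fract n d = Fract (fst x) (snd x))"
  have "\<exists>x. snd x \<noteq> 0 \<and> Fract n d = Fract (fst x) (snd x)"
    by (rule exI[of _ "(n,d)"]) (simp add: assms)
  from someI_ex[OF this] have pr: "snd pr \<noteq> 0" "Fract n d = Fract (fst pr) (snd pr)"
    unfolding pr_def by auto
  have e: "eval_ratfun (Fract n d) X = ev (fst pr) X / ev (snd pr) X"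
  proof -
    have "(SOME (na, da). da \<noteq> 0 \<and> Fract n d = Fract na da) = pr"
      unfolding pr_def by (rule arg_cong[where f=Eps]) auto
    then show ?thesis unfolding eval_ratfun_def by (simp add: Let_def case_prod_beta ev_def)
  qed
  have "n * snd pr = fst pr * d" using pr assms(2) by (simp add: eq_fract)
  then have "ev n X * ev (snd pr) X = ev (fst pr) X * ev d X" by (metis ev_mult)
  moreover have "ev d X \<noteq> 0" "ev (snd pr) X \<noteq> 0" using assms pr unfolding good_def by auto
  ultimately show ?thesis unfolding e by (simp add: field_simps)
qed

lemma eval_zero: "good X \<Longrightarrow> eval_ratfun 0 X = 0"
  using eval_Fract[of X 1 0] by (simp add: Zero_fract_def)

lemma good_pt: "good (fls_const a + fls_X)" using ev_pt unfolding good_def by blast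
lemma good_br: "good (fls_const a + fls_X\<^sup>2)" using ev_br unfolding good_def by blast
lemma good_inf: "good fls_X_inv" using ev_inf unfolding good_def by blast

lemma fls_sqrt:
  fixes F :: "complex fls"
  assumes "F \<noteq> 0" "fls_subdegree F = 2 * k"
  shows "\<exists>Y. Y\<^sup>2 = F"
proof -
  define B where "B = fls_base_factor_to_fps F"
  have B0: "B $ 0 \<noteq> 0" using assms(1) unfolding B_def by (rule fls_base_factor_to_fps_base)
  define S where "S = fps_radical (\<lambda>_ c. csqrt c) (Suc 1) B"
  have "(csqrt (B $ 0)) ^ Suc 1 = B $ 0" by (simp add: power2_eq_square[symmetric])
  then have S2: "S ^ Suc 1 = B" using power_radical[OF B0, of "\<lambda>_ c. csqrt c" 1] unfolding S_def by simp
  have F: "F = fls_X_intpow (2*k) * fps_to_fls B"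
    using fls_conv_base_factor_to_fps_shift_subdegree[of F] assms(2) unfolding B_def
    by (simp add: fls_X_intpow_times_conv_shift)
  define Y where "Y = fls_X_intpow k * fps_to_fls S"
  have p2: "(fls_X_intpow k)^2 = (fls_X_intpow (2*k) :: complex fls)"
    using fls_X_intpow_power[of k 2] by (metis of_nat_numeral)
  have s2: "S ^ 2 = B" using S2 by (simp add: numeral_2_eq_2)
  have "Y\<^sup>2 = (fls_X_intpow k)^2 * fps_to_fls (S ^ 2)"
    unfolding Y_def by (simp add: power_mult_distrib fps_to_fls_power)
  then have "Y\<^sup>2 = F" unfolding p2 s2 using F by (simp only:)
  then show ?thesis by blast
qed

definition nn :: "complex fls \<Rightarrow> bool" where
  "nn h \<longleftrightarrow> h = 0 \<or> 0 \<le> fls_subdegree h"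

lemma nn_add: "nn a \<Longrightarrow> nn b \<Longrightarrow> nn (a + b)"
  unfolding nn_def using fls_plus_subdegree[of a b] by force

lemma nn_mult: "nn a \<Longrightarrow> nn b \<Longrightarrow> nn (a * b)"
  unfolding nn_def by (metis fls_subdegree_mult mult_eq_0_iff add_nonneg_nonneg)

lemma nn_const: "nn (fls_const c)" unfolding nn_def by simp

lemma nn_diff: "nn a \<Longrightarrow> nn b \<Longrightarrow> nn (a - b)"
  unfolding nn_def using fls_plus_subdegree[of a "-b"] by force

lemma half: "(a::complex fls) = fls_const (1/2) * (a + a)"
proof -
  have "fls_const (1/2) * (a + a) = (fls_const (1/2) + fls_const (1/2)) * a" by (simp add: algebra_simps)
  also have "fls_const (1/2) + fls_const (1/2) = (1 :: complex fls)" by (simp add: fls_plus_const)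
  finally show ?thesis by simp
qed

definition holo_part :: "complex poly \<Rightarrow> nat \<Rightarrow> nat \<Rightarrow> ratfun \<Rightarrow> bool" where
  "holo_part f q e A \<longleftrightarrow>
     (\<forall>(X, Y) \<in> curve_places f. nn (eval_ratfun A X * Y ^ e * fls_deriv X ^ q))"

lemma places_neg: "(X, Y) \<in> curve_places f \<Longrightarrow> (X, -Y) \<in> curve_places f"
  unfolding curve_places_def by auto

lemma holo_split:
  assumes "holo_qdiff f q (A, B)"
  shows "holo_part f q 0 A \<and> holo_part f q 1 B"
proof -
  have *: "nn (eval_ratfun A X * fls_deriv X ^ q) \<and> nn (eval_ratfun B X * Y * fls_deriv X ^ q)"
    if "(X, Y) \<in> curve_places f" for X Y
  proof -
    have g: "nn (eval_ff (A, B) X' Y' * fls_deriv X' ^ q)" if "(X', Y') \<in> curve_places f" for X' Y'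
    proof -
      have "let h = eval_ff (A, B) X' Y' * fls_deriv X' ^ q in h = 0 \<or> 0 \<le> fls_subdegree h"
        using assms that unfolding holo_qdiff_def by fast
      then show ?thesis unfolding Let_def nn_def .
    qed
    have h1: "nn ((eval_ratfun A X + eval_ratfun B X * Y) * fls_deriv X ^ q)"
      using g[OF that] unfolding eval_ff_def by simp
    have h2: "nn ((eval_ratfun A X + eval_ratfun B X * (-Y)) * fls_deriv X ^ q)"
      using g[OF places_neg[OF that]] unfolding eval_ff_def by simp
    define a where "a = eval_ratfun A X * fls_deriv X ^ q"
    define b where "b = eval_ratfun B X * Y * fls_deriv X ^ q"
    have e1: "(eval_ratfun A X + eval_ratfun B X * Y) * fls_deriv X ^ q = a + b"
      unfolding a_def b_def by (simp add: algebra_simps)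
    have e2: "(eval_ratfun A X + eval_ratfun B X * (-Y)) * fls_deriv X ^ q = a - b"
      unfolding a_def b_def by (simp add: algebra_simps)
    have ab1: "nn (a + b)" using h1 e1 by simp
    have ab2: "nn (a - b)" using h2 e2 by simp
    have s1: "(a + b) + (a - b) = a + a" by simp
    have ea: "a = fls_const (1/2) * ((a + b) + (a - b))" by (simp only: s1 flip: half)
    have "nn (fls_const (1/2) * ((a + b) + (a - b)))" by (intro nn_mult nn_const nn_add ab1 ab2)
    then have a: "nn a" by (subst ea)
    have s2: "(a + b) - (a - b) = b + b" by simp
    have eb: "b = fls_const (1/2) * ((a + b) - (a - b))" by (simp only: s2 flip: half)
    have "nn (fls_const (1/2) * ((a + b) - (a - b)))" by (intro nn_mult nn_const nn_diff ab1 ab2)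
    then have b: "nn b" by (subst eb)
    note a = a[unfolded a_def] and b = b[unfolded b_def]
    show ?thesis using a b by simp
  qed
  then show ?thesis unfolding holo_part_def by auto
qed

lemma holo_join:
  assumes "holo_part f q 0 A" "holo_part f q 1 B"
  shows "holo_qdiff f q (A, B)"
  unfolding holo_qdiff_def
proof (intro ballI, clarify)
  fix X Y assume p: "(X, Y) \<in> curve_places f"
  have "nn (eval_ratfun A X * fls_deriv X ^ q + eval_ratfun B X * Y * fls_deriv X ^ q)"
    using assms p unfolding holo_part_def by (intro nn_add) auto
  then show "let h = eval_ff (A, B) X Y * fls_deriv X ^ q in h = 0 \<or> 0 \<le> fls_subdegree h"
    unfolding nn_def eval_ff_def by (simp add: algebra_simps Let_def)
qed

lemma order_pow: "p \<noteq> 0 \<Longrightarrow> order z (p ^ k) = k * order z p"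
  by (induct k) (auto simp: order_mult)

lemma dvd_by_order:
  fixes d g :: "complex poly"
  assumes "d \<noteq> 0" "g \<noteq> 0" "\<And>z. order z d \<le> order z g"
  shows "d dvd g"
  using assms
proof (induct "degree d" arbitrary: d g rule: less_induct)
  case less
  show ?case
  proof (cases "degree d = 0")
    case True
    then obtain c where c: "d = [:c:]" by (metis degree_eq_zeroE)
    with less.prems have "c \<noteq> 0" by auto
    then have "g = d * smult (1/c) g" using c by simp
    then show ?thesis by (rule dvdI)
  next
    case False
    then obtain z where z: "poly d z = 0"
      using fundamental_theorem_of_algebra_alt[of d] by fastforce
    obtain d' where d': "d = [:-z,1:] * d'" using z poly_eq_0_iff_dvd by blast
    have "order z d > 0" using z less.prems(1) order_root by blast
    then have "order z g > 0" using less.prems(3)[of z] by linarith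
    then have "poly g z = 0" using order_root by blast
    then obtain g' where g': "g = [:-z,1:] * g'" using poly_eq_0_iff_dvd by blast
    have nz: "d' \<noteq> 0" "g' \<noteq> 0" using d' g' less.prems by auto
    have "order w d' \<le> order w g'" for w
    proof -
      have l: "[:-z,1:] \<noteq> (0::complex poly)" by simp
      have "order w ([:-z,1:] * d') = order w [:-z,1:] + order w d'"
        using nz l by (intro order_mult) (simp only: mult_eq_0_iff de_Morgan_disj, simp)
      moreover have "order w ([:-z,1:] * g') = order w [:-z,1:] + order w g'"
        using nz l by (intro order_mult) (simp only: mult_eq_0_iff de_Morgan_disj, simp)
      ultimately show ?thesis using less.prems(3)[of w] unfolding d' g' by linarith
    qed
    moreover have "degree d' < degree d"
    proof -
      have "degree ([:-z,1:] * d') = degree [:-z,1:] + degree d'"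
        using nz by (intro degree_mult_eq) auto
      then show ?thesis unfolding d'[symmetric] by simp
    qed
    ultimately have "d' dvd g'" using less.hyps nz by blast
    then show ?thesis unfolding d' g' by (rule mult_dvd_mono[OF dvd_refl])
  qed
qed

lemma vh:
  fixes a b c d :: "complex fls"
  assumes "a \<noteq> 0" "b \<noteq> 0" "c \<noteq> 0" "d \<noteq> 0"
  shows "a / b ^ K * c ^ e * d ^ q \<noteq> 0 \<and> fls_subdegree (a / b ^ K * c ^ e * d ^ q) =
     fls_subdegree a - int K * fls_subdegree b + int e * fls_subdegree c + int q * fls_subdegree d"
  using assms by (simp add: fls_divide_subdegree fls_subdegree_pow)

lemma sq_subdeg: "(Y::complex fls)\<^sup>2 = F \<Longrightarrow> 2 * fls_subdegree Y = fls_subdegree F"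
  by (metis fls_subdegree_pow of_nat_numeral)

lemma deriv_pt[simp]: "fls_deriv (fls_const a + fls_X :: complex fls) = 1" by simp

lemma deriv_br: "fls_deriv (fls_const a + fls_X\<^sup>2 :: complex fls) = 2 * fls_X"
  by (simp add: fls_deriv_power)

lemma two_X_nz: "(2 * fls_X :: complex fls) \<noteq> 0 \<and> fls_subdegree (2 * fls_X :: complex fls) = 1"
proof -
  have "(2 :: complex fls) = fls_const 2" by (metis fls_const_numeral) 
  then show ?thesis by (simp add: fls_subdegree_mult)
qed

lemma place_cases:
  assumes "(X, Y) \<in> curve_places f"
  obtains a where "poly f a \<noteq> 0" "X = fls_const a + fls_X" "Y\<^sup>2 = ev f X"
  | a where "poly f a = 0" "X = fls_const a + fls_X\<^sup>2" "Y\<^sup>2 = ev f X"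
  | "X = fls_X_inv" "Y\<^sup>2 = ev f X"
  using assms unfolding curve_places_def ev_def by auto

lemma f_facts:
  assumes "degree f = 8" "rsquarefree f"
  shows "f \<noteq> 0" "\<And>a. poly f a \<noteq> 0 \<Longrightarrow> order a f = 0" "\<And>a. poly f a = 0 \<Longrightarrow> order a f = 1"
  using assms rsquarefree_root_order order_0I by (auto simp: rsquarefree_def)

lemma holo_suff:
  assumes f8: "degree f = 8" and sf: "rsquarefree f" and K: "2 * K \<le> q + e"
    and deg: "P \<noteq> 0 \<Longrightarrow> int (degree P) + 4 * int e + 2 * int q \<le> 8 * int K"
  shows "holo_part f q e (Fract P (f ^ K))"
  unfolding holo_part_def
proof (clarify)
  fix X Y assume pl: "(X, Y) \<in> curve_places f"
  have fnz: "f \<noteq> 0" using f_facts[OF f8 sf] by auto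
  have gX: "good X" using place_cases[OF pl] good_pt good_br good_inf by metis
  have ev: "eval_ratfun (Fract P (f ^ K)) X = ev P X / ev f X ^ K"
    using eval_Fract[OF gX, of "f^K" P] fnz by (simp add: ev_power)
  show "nn (eval_ratfun (Fract P (f ^ K)) X * Y ^ e * fls_deriv X ^ q)"
  proof (cases "P = 0")
    case True
    then show ?thesis unfolding ev nn_def by simp
  next
    case False
    have Pnz: "ev P X \<noteq> 0" and fXnz: "ev f X \<noteq> 0" using gX False fnz unfolding good_def by auto
    have Y2: "Y\<^sup>2 = ev f X" using pl unfolding curve_places_def ev_def by auto
    then have Ynz: "Y \<noteq> 0" using fXnz by auto
    have vY: "2 * fls_subdegree Y = fls_subdegree (ev f X)" using sq_subdeg[OF Y2] .
    from pl show ?thesis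
    proof (cases rule: place_cases)
      case (1 a)
      have "fls_subdegree (ev f X) = 0" using ev_pt[OF fnz, of a] f_facts[OF f8 sf] 1 by simp
      moreover have "fls_subdegree (ev P X) \<ge> 0" using ev_pt[OF False, of a] 1 by simp
      moreover have "fls_deriv X = 1" using 1 by simp
      ultimately show ?thesis using vh[OF Pnz fXnz Ynz, of 1 K e q] vY unfolding ev nn_def by simp
    next
      case (2 a)
      have "fls_subdegree (ev f X) = 2" using ev_br[OF fnz, of a] f_facts[OF f8 sf] 2 by simp
      moreover have "fls_subdegree (ev P X) \<ge> 0" using ev_br[OF False, of a] 2 by simp
      moreover have D: "fls_deriv X = 2 * fls_X" using 2 deriv_br by simp
      ultimately show ?thesis using vh[OF Pnz fXnz Ynz, of "2 * fls_X" K e q] vY two_X_nz K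
        unfolding ev nn_def D by simp
    next
      case 3
      have "fls_subdegree (ev f X) = - 8" using ev_inf[OF fnz] f8 3 by simp
      moreover have "fls_subdegree (ev P X) = - int (degree P)" using ev_inf[OF False] 3 by simp
      moreover have D: "fls_deriv X = - (fls_X_inv\<^sup>2)" using 3 by simp
      moreover have "- (fls_X_inv\<^sup>2) \<noteq> (0 :: complex fls)" "fls_subdegree (- (fls_X_inv\<^sup>2) :: complex fls) = -2"
        by auto
      ultimately show ?thesis using vh[OF Pnz fXnz Ynz, of "- (fls_X_inv\<^sup>2)" K e q] vY deg[OF False]
        unfolding ev nn_def D by simp
    qed
  qed
qed

lemma coprime_root:
  fixes n d :: "complex poly"
  assumes "coprime n d" "poly d z = 0"
  shows "poly n z \<noteq> 0"
proof
  assume "poly n z = 0"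
  then have "[:-z,1:] dvd n" "[:-z,1:] dvd d" using assms poly_eq_0_iff_dvd by blast+
  then have "is_unit [:-z,1:]" using assms(1) coprime_common_divisor by blast
  then show False by (simp add: is_unit_iff_degree)
qed

lemma place_ineq:
  assumes pl: "(X, Y) \<in> curve_places f" and f8: "degree f = 8" and sf: "rsquarefree f"
    and hp: "holo_part f q e (Fract n d)" and n: "n \<noteq> 0" and d: "d \<noteq> 0"
    and D: "fls_deriv X \<noteq> 0"
  shows "fls_subdegree (ev n X) - fls_subdegree (ev d X) + int e * fls_subdegree Y
          + int q * fls_subdegree (fls_deriv X) \<ge> 0"
proof -
  have fnz: "f \<noteq> 0" using f_facts[OF f8 sf] by auto
  have gX: "good X" using place_cases[OF pl] good_pt good_br good_inf by metis
  have ev: "eval_ratfun (Fract n d) X = ev n X / ev d X ^ 1"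
    using eval_Fract[OF gX d, of n] by simp
  have nz: "ev n X \<noteq> 0" "ev d X \<noteq> 0" "ev f X \<noteq> 0" using gX n d fnz unfolding good_def by auto
  have Y2: "Y\<^sup>2 = ev f X" using pl unfolding curve_places_def ev_def by auto
  then have Ynz: "Y \<noteq> 0" using nz by auto
  have "nn (eval_ratfun (Fract n d) X * Y ^ e * fls_deriv X ^ q)"
    using hp pl unfolding holo_part_def by auto
  then show ?thesis using vh[OF nz(1,2) Ynz D, of 1 e q] Ynz D unfolding ev nn_def by auto
qed

lemma place_pt:
  assumes "degree f = 8" "rsquarefree f" "poly f a \<noteq> 0"
  shows "\<exists>Y. (fls_const a + fls_X, Y) \<in> curve_places f \<and> fls_subdegree Y = 0"
proof -
  have fnz: "f \<noteq> 0" using f_facts[OF assms(1,2)] by auto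
  have "ev f (fls_const a + fls_X) \<noteq> 0" "fls_subdegree (ev f (fls_const a + fls_X)) = 2 * 0"
    using ev_pt[OF fnz, of a] f_facts[OF assms(1,2)] assms(3) by auto
  then obtain Y where Y: "Y\<^sup>2 = ev f (fls_const a + fls_X)" using fls_sqrt by blast
  then have "fls_subdegree Y = 0" using sq_subdeg[OF Y] ev_pt[OF fnz, of a] f_facts[OF assms(1,2)] assms(3) by simp
  then show ?thesis using Y assms(3) unfolding curve_places_def ev_def by auto
qed

lemma place_br:
  assumes "degree f = 8" "rsquarefree f" "poly f a = 0"
  shows "\<exists>Y. (fls_const a + fls_X\<^sup>2, Y) \<in> curve_places f \<and> fls_subdegree Y = 1"
proof -
  have fnz: "f \<noteq> 0" using f_facts[OF assms(1,2)] by auto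
  have "ev f (fls_const a + fls_X\<^sup>2) \<noteq> 0" "fls_subdegree (ev f (fls_const a + fls_X\<^sup>2)) = 2 * 1"
    using ev_br[OF fnz, of a] f_facts[OF assms(1,2)] assms(3) by auto
  then obtain Y where Y: "Y\<^sup>2 = ev f (fls_const a + fls_X\<^sup>2)" using fls_sqrt by blast
  then have "fls_subdegree Y = 1" using sq_subdeg[OF Y] ev_br[OF fnz, of a] f_facts[OF assms(1,2)] assms(3) by simp
  then show ?thesis using Y assms(3) unfolding curve_places_def ev_def by auto
qed

lemma place_inf:
  assumes "degree f = 8" "rsquarefree f"
  shows "\<exists>Y. (fls_X_inv, Y) \<in> curve_places f \<and> fls_subdegree Y = -4"
proof -
  have fnz: "f \<noteq> 0" using f_facts[OF assms(1,2)] by auto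
  have "ev f fls_X_inv \<noteq> 0" "fls_subdegree (ev f fls_X_inv) = 2 * (-4)"
    using ev_inf[OF fnz] assms(1) by auto
  then obtain Y where Y: "Y\<^sup>2 = ev f fls_X_inv" using fls_sqrt by blast
  then have "fls_subdegree Y = -4" using sq_subdeg[OF Y] ev_inf[OF fnz] assms(1) by simp
  then show ?thesis using Y unfolding curve_places_def ev_def by auto
qed

lemma Fract_zero_num: "Fract 0 b = (0 :: 'a::idom fract)"
  by (cases "b = 0") (simp_all add: Zero_fract_def eq_fract)

lemma holo_nec:
  assumes f8: "degree f = 8" and sf: "rsquarefree f" and hp: "holo_part f q e A"
  shows "\<exists>P. A = Fract P (f ^ ((q + e) div 2)) \<and>
           (P \<noteq> 0 \<longrightarrow> int (degree P) + 4 * int e + 2 * int q \<le> 8 * int ((q + e) div 2))"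
proof (cases "A = 0")
  case True
  then show ?thesis by (intro exI[of _ 0]) (simp add: Fract_zero_num)
next
  case False
  define K where "K = (q + e) div 2"
  define n where "n = fst (quot_of_fract A)"
  define d where "d = snd (quot_of_fract A)"
  have A: "A = Fract n d" unfolding n_def d_def by simp
  have d: "d \<noteq> 0" unfolding d_def by simp
  have n: "n \<noteq> 0" unfolding n_def using False by simp
  have cop: "coprime n d" unfolding n_def d_def by (rule coprime_quot_of_fract)
  have fnz: "f \<noteq> 0" using f_facts[OF f8 sf] by auto
  note hp' = hp[unfolded A]
  have rootf: "poly f z = 0" if "poly d z = 0" for z
  proof (rule ccontr)
    assume nf: "poly f z \<noteq> 0"
    obtain Y where Y: "(fls_const z + fls_X, Y) \<in> curve_places f" "fls_subdegree Y = 0"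
      using place_pt[OF f8 sf nf] by blast
    have "order z n = 0" using coprime_root[OF cop that] order_0I by blast
    moreover have "order z d > 0" using that d order_root by blast
    ultimately show False using place_ineq[OF Y(1) f8 sf hp' n d] Y(2) ev_pt[OF n, of z] ev_pt[OF d, of z]
      by simp
  qed
  have ordK: "order z d \<le> order z (f ^ K)" for z
  proof (cases "poly d z = 0")
    case False
    then show ?thesis using order_0I[OF False] by simp
  next
    case True
    have fz: "poly f z = 0" using rootf[OF True] .
    obtain Y where Y: "(fls_const z + fls_X\<^sup>2, Y) \<in> curve_places f" "fls_subdegree Y = 1"
      using place_br[OF f8 sf fz] by blast
    have "order z n = 0" using coprime_root[OF cop True] order_0I by blast
    moreover have "fls_deriv (fls_const z + fls_X\<^sup>2 :: complex fls) \<noteq> 0"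
      "fls_subdegree (fls_deriv (fls_const z + fls_X\<^sup>2 :: complex fls)) = 1"
      using two_X_nz deriv_br by auto
    ultimately have "2 * int (order z d) \<le> int e + int q"
      using place_ineq[OF Y(1) f8 sf hp' n d] Y(2) ev_br[OF n, of z] ev_br[OF d, of z] by simp
    then have "order z d \<le> K" unfolding K_def by linarith
    moreover have "order z (f ^ K) = K" using order_pow[OF fnz] f_facts[OF f8 sf] fz by simp
    ultimately show ?thesis by simp
  qed
  have "d dvd f ^ K" by (rule dvd_by_order[OF d _ ordK]) (simp add: fnz)
  then obtain w where w: "f ^ K = d * w" by (elim dvdE)
  have wnz: "w \<noteq> 0" using w fnz by auto
  obtain Y where Y: "(fls_X_inv, Y) \<in> curve_places f" "fls_subdegree Y = -4"
    using place_inf[OF f8 sf] by blast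
  have "fls_deriv (fls_X_inv :: complex fls) \<noteq> 0"
    "fls_subdegree (fls_deriv (fls_X_inv :: complex fls)) = -2" by auto
  then have ineq: "- int (degree n) + int (degree d) - 4 * int e - 2 * int q \<ge> 0"
    using place_ineq[OF Y(1) f8 sf hp' n d] Y(2) ev_inf[OF n] ev_inf[OF d] by simp
  have dw: "int (degree d) + int (degree w) = 8 * int K"
  proof -
    have "degree (f ^ K) = K * 8" using degree_power_eq[OF fnz, of K] f8 by simp
    then show ?thesis using w degree_mult_eq[OF d wnz] by simp
  qed
  have "A = Fract (n * w) (f ^ K)" unfolding A w
    using mult_fract_cancel[OF wnz, of n d] by (simp add: mult.commute)
  moreover have "degree (n * w) = degree n + degree w" using degree_mult_eq[OF n wnz] .
  ultimately show ?thesis using ineq dw unfolding K_def by (intro exI[of _ "n * w"]) simp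
qed

lemma pcompose_pow: "pcompose (p ^ n) q = (pcompose p q) ^ n"
  by (induct n) (simp_all add: pcompose_mult pcompose_1)

lemma shift_sum_compose:
  fixes a :: "nat \<Rightarrow> complex"
  shows "pcompose (\<Sum>j<N. smult (a j) ([:-\<beta>,1:] ^ j)) [:\<beta>,1:] = (\<Sum>j<N. monom (a j) j)"
  by (simp add: pcompose_sum pcompose_smult pcompose_pow pcompose_pCons monom_altdef)

lemma coeff_monom_sum:
  fixes a :: "nat \<Rightarrow> complex"
  assumes "i < N"
  shows "coeff (\<Sum>j<N. monom (a j) j) i = a i"
  using assms by (simp add: coeff_sum coeff_monom)

lemma shift_indep:
  fixes a :: "nat \<Rightarrow> complex"
  assumes "(\<Sum>j<N. smult (a j) ([:-\<beta>,1:] ^ j)) = 0" "i < N"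
  shows "a i = 0"
proof -
  have "(\<Sum>j<N. monom (a j) j) = 0" using shift_sum_compose[where a=a and N=N and \<beta>=\<beta>] assms(1) by simp
  then show ?thesis using coeff_monom_sum[OF assms(2), of a] by simp
qed

lemma shift_rep:
  fixes P :: "complex poly"
  assumes "P \<noteq> 0 \<longrightarrow> degree P < N"
  shows "\<exists>a. P = (\<Sum>j<N. smult (a j) ([:-\<beta>,1:] ^ j))"
proof (cases "P = 0")
  case True
  then show ?thesis by (intro exI[of _ "\<lambda>_. 0"]) simp
next
  case False
  with assms have N: "degree P < N" by simp
  define Q where "Q = pcompose P [:\<beta>,1:]"
  have dQ: "degree Q \<le> N - 1" unfolding Q_def using N by (simp add: degree_pcompose)
  have "{..N - 1} = {..<N}" using N by auto
  then have Qs: "Q = (\<Sum>j<N. monom (coeff Q j) j)" using poly_as_sum_of_monoms'[OF dQ] by simp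
  have "pcompose Q [:-\<beta>,1:] = P"
  proof -
    have "pcompose [:\<beta>,1:] [:-\<beta>,1:] = [:0,1:]" by (simp add: pcompose_pCons)
    then show ?thesis unfolding Q_def by (simp flip: pcompose_assoc)
  qed
  moreover have "pcompose (\<Sum>j<N. monom (coeff Q j) j) [:-\<beta>,1:] = (\<Sum>j<N. smult (coeff Q j) ([:-\<beta>,1:] ^ j))"
    by (simp add: pcompose_sum monom_altdef pcompose_smult pcompose_pow pcompose_pCons)
  ultimately show ?thesis using Qs by metis
qed

lemma degree_shift_sum:
  fixes a :: "nat \<Rightarrow> complex"
  shows "degree (\<Sum>j<N. smult (a j) ([:-\<beta>,1:] ^ j)) < N \<or> (\<Sum>j<N. smult (a j) ([:-\<beta>,1:] ^ j)) = 0"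
proof (cases N)
  case 0 then show ?thesis by simp
next
  case (Suc M)
  have "degree (\<Sum>j<N. smult (a j) ([:-\<beta>,1:] ^ j)) \<le> M"
    by (rule degree_sum_le) (auto simp: Suc degree_power_le intro: order.trans[OF degree_smult_le]
        order.trans[OF degree_power_le])
  then show ?thesis using Suc by simp
qed

lemma holo_char:
  assumes f8: "degree f = 8" and sf: "rsquarefree f"
  shows "holo_qdiff f q (A, B) \<longleftrightarrow>
    (\<exists>PA. A = Fract PA (f ^ (q div 2)) \<and> (PA \<noteq> 0 \<longrightarrow> int (degree PA) + 2 * int q \<le> 8 * int (q div 2))) \<and>
    (\<exists>PB. B = Fract PB (f ^ ((q + 1) div 2)) \<and> (PB \<noteq> 0 \<longrightarrow> int (degree PB) + 4 + 2 * int q \<le> 8 * int ((q + 1) div 2)))"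
  (is "?L \<longleftrightarrow> ?R")
proof
  assume "holo_qdiff f q (A, B)"
  from holo_split[OF this] have "holo_part f q 0 A" "holo_part f q 1 B" by auto
  from holo_nec[OF f8 sf this(1)] holo_nec[OF f8 sf this(2)] show "?R" by simp
next
  assume r: "?R"
  then obtain PA PB where P: "A = Fract PA (f ^ (q div 2))" "PA \<noteq> 0 \<longrightarrow> int (degree PA) + 2 * int q \<le> 8 * int (q div 2)"
    "B = Fract PB (f ^ ((q + 1) div 2))" "PB \<noteq> 0 \<longrightarrow> int (degree PB) + 4 + 2 * int q \<le> 8 * int ((q + 1) div 2)"
    by blast
  have "holo_part f q 0 A" unfolding P(1) by (rule holo_suff[OF f8 sf]) (use P(2) in auto)
  moreover have "holo_part f q 1 B" unfolding P(3) by (rule holo_suff[OF f8 sf]) (use P(4) in auto)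
  ultimately show "holo_qdiff f q (A, B)" by (rule holo_join)
qed

definition ok :: "nat \<Rightarrow> complex poly \<Rightarrow> bool" where
  "ok N p \<longleftrightarrow> (p \<noteq> 0 \<longrightarrow> degree p < N)"

lemma ok_0[simp]: "ok N 0" by (simp add: ok_def)

lemma ok_add: "ok N p \<Longrightarrow> ok N q \<Longrightarrow> ok N (p + q)"
  unfolding ok_def
proof (intro impI)
  assume p: "p \<noteq> 0 \<longrightarrow> degree p < N" and q: "q \<noteq> 0 \<longrightarrow> degree q < N" and pq: "p + q \<noteq> 0"
  show "degree (p + q) < N"
  proof (cases "p = 0")
    case True then show ?thesis using q pq by simp
  next
    case False
    show ?thesis
    proof (cases "q = 0")
      case True then show ?thesis using p False by simp
    next
      case q0: False
      have "degree (p + q) \<le> max (degree p) (degree q)" by (rule degree_add_le_max)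
      then show ?thesis using p q False q0 by simp
    qed
  qed
qed

lemma ok_smult: "ok N p \<Longrightarrow> ok N (smult c p)"
  unfolding ok_def using degree_smult_le[of c p] by fastforce

lemma ok_uminus: "ok N p \<Longrightarrow> ok N (- p)"
  unfolding ok_def by simp

lemma ok_diff: "ok N p \<Longrightarrow> ok N q \<Longrightarrow> ok N (p - q)"
  using ok_add[of N p "-q"] ok_uminus[of N q] by simp

lemma ok_sum: "(\<And>j. j \<in> S \<Longrightarrow> ok N (g j)) \<Longrightarrow> ok N (sum g S)"
  by (induct S rule: infinite_finite_induct) (auto intro: ok_add)

lemma ok_shift: "ok N (\<Sum>j<N. smult (a j) ([:-\<beta>,1:] ^ j))"
  using degree_shift_sum[where N=N and a=a and \<beta>=\<beta>] unfolding ok_def by auto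

lemma sum_Fract:
  fixes p :: "nat \<Rightarrow> complex poly"
  assumes "d \<noteq> 0"
  shows "(\<Sum>j\<in>S. Fract (p j) d) = Fract (\<Sum>j\<in>S. p j) d"
proof (induct S rule: infinite_finite_induct)
  case (infinite A) then show ?case by (simp add: Fract_zero_num)
next
  case empty then show ?case by (simp add: Fract_zero_num)
next
  case (insert x F)
  have "Fract (p x) d + Fract (sum p F) d = Fract (d * (p x + sum p F)) (d * d)"
    using assms by (simp add: algebra_simps)
  also have "\<dots> = Fract (p x + sum p F) d" using mult_fract_cancel[OF assms] by simp
  finally show ?case using insert by simp
qed

lemma scale_Fract: "ratfun_of_poly [:c:] * Fract p d = Fract (smult c p) d"
  by (simp add: ratfun_of_poly_def)

lemma Fract_eq0: "d \<noteq> 0 \<Longrightarrow> Fract p d = (0::ratfun) \<longleftrightarrow> p = 0"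
  by (simp add: Zero_fract_def eq_fract)

lemma add_Fract_same: "(d::complex poly) \<noteq> 0 \<Longrightarrow> Fract a d + Fract b d = Fract (a + b) d"
  using sum_Fract[of d "\<lambda>i. if i = (0::nat) then a else b" "{0,1}"] by simp

lemma sum_split:
  fixes iA iB :: "nat \<Rightarrow> nat" and NA NB n :: nat
  assumes iA: "inj_on iA {..<NA}" and iB: "inj_on iB {..<NB}"
    and dj: "iA ` {..<NA} \<inter> iB ` {..<NB} = {}" and un: "iA ` {..<NA} \<union> iB ` {..<NB} = {..<n}"
  shows "(\<Sum>i<n. h i) = (\<Sum>j<NA. h (iA j)) + (\<Sum>j<NB. h (iB j))"
proof -
  have "(\<Sum>i<n. h i) = (\<Sum>i\<in>iA ` {..<NA}. h i) + (\<Sum>i\<in>iB ` {..<NB}. h i)"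
    unfolding un[symmetric] by (rule sum.union_disjoint) (simp_all add: dj)
  also have "\<dots> = (\<Sum>j<NA. h (iA j)) + (\<Sum>j<NB. h (iB j))"
    using sum.reindex[OF iA, of h] sum.reindex[OF iB, of h] by simp
  finally show ?thesis .
qed

lemma GEN:
  fixes b :: "nat \<Rightarrow> ffelem" and iA iB :: "nat \<Rightarrow> nat" and TT :: "nat \<Rightarrow> complex poly"
  assumes fnz: "f \<noteq> 0"
    and hol: "\<And>A B. holo_qdiff f q (A, B) \<longleftrightarrow>
       (\<exists>PA. A = Fract PA (f ^ KA) \<and> ok NA PA) \<and> (\<exists>PB. B = Fract PB (f ^ KB) \<and> ok NB PB)"
    and iA: "inj_on iA {..<NA}" and iB: "inj_on iB {..<NB}"
    and dj: "iA ` {..<NA} \<inter> iB ` {..<NB} = {}" and un: "iA ` {..<NA} \<union> iB ` {..<NB} = {..<n}"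
    and bA: "\<And>j. j < NA \<Longrightarrow> b (iA j) = (Fract ([:-\<beta>,1:] ^ j) (f ^ KA), 0)"
    and bB: "\<And>j. j < NB \<Longrightarrow> b (iB j) = (Fract (TT j) (f ^ KA), Fract ([:-\<beta>,1:] ^ j) (f ^ KB))"
    and TT: "\<And>j. j < NB \<Longrightarrow> ok NA (TT j)"
  shows "is_basis_H0 f q n b"
proof -
  define L where "L = [:-\<beta>,1:]"
  have fA: "f ^ KA \<noteq> 0" "f ^ KB \<noteq> 0" using fnz by auto
  define SA where "SA c = (\<Sum>j<NA. smult (c (iA j)) (L ^ j))" for c :: "nat \<Rightarrow> complex"
  define ST where "ST c = (\<Sum>j<NB. smult (c (iB j)) (TT j))" for c :: "nat \<Rightarrow> complex"
  define SB where "SB c = (\<Sum>j<NB. smult (c (iB j)) (L ^ j))" for c :: "nat \<Rightarrow> complex"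
  have lc: "ff_lincomb c b n = (Fract (SA c + ST c) (f ^ KA), Fract (SB c) (f ^ KB))" for c
  proof -
    have "fst (ff_lincomb c b n) = (\<Sum>j<NA. fst (ff_scale (c (iA j)) (b (iA j)))) + (\<Sum>j<NB. fst (ff_scale (c (iB j)) (b (iB j))))"
      unfolding ff_lincomb_def using sum_split[OF iA iB dj un] by simp
    also have "\<dots> = (\<Sum>j<NA. Fract (smult (c (iA j)) (L ^ j)) (f ^ KA)) + (\<Sum>j<NB. Fract (smult (c (iB j)) (TT j)) (f ^ KA))"
      using bA bB by (simp add: ff_scale_def scale_Fract L_def)
    also have "\<dots> = Fract (SA c + ST c) (f ^ KA)"
      by (simp add: sum_Fract[OF fA(1)] add_Fract_same[OF fA(1)] SA_def ST_def)
    finally have 1: "fst (ff_lincomb c b n) = Fract (SA c + ST c) (f ^ KA)" .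
    have "snd (ff_lincomb c b n) = (\<Sum>j<NA. snd (ff_scale (c (iA j)) (b (iA j)))) + (\<Sum>j<NB. snd (ff_scale (c (iB j)) (b (iB j))))"
      unfolding ff_lincomb_def using sum_split[OF iA iB dj un] by simp
    also have "\<dots> = (\<Sum>j<NB. Fract (smult (c (iB j)) (L ^ j)) (f ^ KB))"
      using bA bB by (simp add: ff_scale_def scale_Fract L_def)
    also have "\<dots> = Fract (SB c) (f ^ KB)"
      by (simp add: sum_Fract[OF fA(2)] SB_def)
    finally have 2: "snd (ff_lincomb c b n) = Fract (SB c) (f ^ KB)" .
    show ?thesis using 1 2 by (metis prod.collapse)
  qed
  have cover: "\<And>i. i < n \<Longrightarrow> (\<exists>j<NA. i = iA j) \<or> (\<exists>j<NB. i = iB j)"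
    using un by auto
  have part1: "\<forall>i<n. holo_qdiff f q (b i)"
  proof (intro allI impI)
    fix i assume "i < n"
    then consider j where "j < NA" "i = iA j" | j where "j < NB" "i = iB j" using cover by blast
    then show "holo_qdiff f q (b i)"
    proof cases
      case 1
      have "ok NA ([:-\<beta>,1:] ^ j)" using 1 unfolding ok_def by (simp add: degree_power_eq)
      then have a: "\<exists>PA. Fract ([:-\<beta>,1:] ^ j) (f ^ KA) = Fract PA (f ^ KA) \<and> ok NA PA" by blast
      have b: "\<exists>PB. (0::ratfun) = Fract PB (f ^ KB) \<and> ok NB PB"
        by (intro exI[of _ 0]) (simp add: Fract_zero_num)
      have "holo_qdiff f q (Fract ([:-\<beta>,1:] ^ j) (f ^ KA), 0)" using hol a b by blast
      then show ?thesis using bA[OF 1(1)] 1(2) by simp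
    next
      case 2
      have "ok NB ([:-\<beta>,1:] ^ j)" using 2 unfolding ok_def by (simp add: degree_power_eq)
      then have b: "\<exists>PB. Fract ([:-\<beta>,1:] ^ j) (f ^ KB) = Fract PB (f ^ KB) \<and> ok NB PB" by blast
      have a: "\<exists>PA. Fract (TT j) (f ^ KA) = Fract PA (f ^ KA) \<and> ok NA PA" using TT[OF 2(1)] by blast
      have "holo_qdiff f q (Fract (TT j) (f ^ KA), Fract ([:-\<beta>,1:] ^ j) (f ^ KB))" using hol a b by blast
      then show ?thesis using bB[OF 2(1)] 2(2) by simp
    qed
  qed
  have part2: "\<forall>c. ff_lincomb c b n = (0, 0) \<longrightarrow> (\<forall>i<n. c i = 0)"
  proof (intro allI impI)
    fix c i assume z: "ff_lincomb c b n = (0, 0)" and i: "i < n"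
    have "SB c = 0" using z lc[of c] Fract_eq0[OF fA(2)] by simp
    then have cB: "c (iB j) = 0" if "j < NB" for j
      using shift_indep[where a="\<lambda>j. c (iB j)" and N=NB and \<beta>=\<beta> and i=j] that unfolding SB_def L_def by simp
    then have "ST c = 0" unfolding ST_def by simp
    then have "SA c = 0" using z lc[of c] Fract_eq0[OF fA(1)] by simp
    then have cA: "c (iA j) = 0" if "j < NA" for j
      using shift_indep[where a="\<lambda>j. c (iA j)" and N=NA and \<beta>=\<beta> and i=j] that unfolding SA_def L_def by simp
    show "c i = 0" using cover[OF i] cA cB by blast
  qed
  have part3: "\<forall>g. holo_qdiff f q g \<longrightarrow> (\<exists>c. g = ff_lincomb c b n)"
  proof (intro allI impI)
    fix g assume "holo_qdiff f q g"
    moreover obtain A B where g: "g = (A, B)" by fastforce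
    ultimately obtain PA PB where P: "A = Fract PA (f ^ KA)" "ok NA PA" "B = Fract PB (f ^ KB)" "ok NB PB"
      using hol by blast
    obtain aB where aB: "PB = (\<Sum>j<NB. smult (aB j) (L ^ j))" using shift_rep[where P=PB and N=NB and \<beta>=\<beta>] P(4)
      unfolding ok_def L_def by blast
    define R where "R = PA - (\<Sum>j<NB. smult (aB j) (TT j))"
    have "ok NA R" unfolding R_def
      by (intro ok_diff P(2) ok_sum ok_smult TT) simp
    then obtain aA where aA: "R = (\<Sum>j<NA. smult (aA j) (L ^ j))" using shift_rep[where P=R and N=NA and \<beta>=\<beta>]
      unfolding ok_def L_def by blast
    define c where "c i = (if i \<in> iB ` {..<NB} then aB (the_inv_into {..<NB} iB i)
                            else aA (the_inv_into {..<NA} iA i))" for i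
    have cB: "c (iB j) = aB j" if "j < NB" for j
      using that the_inv_into_f_f[OF iB] unfolding c_def by auto
    have cA: "c (iA j) = aA j" if "j < NA" for j
    proof -
      have "iA j \<notin> iB ` {..<NB}" using dj that by auto
      then show ?thesis using that the_inv_into_f_f[OF iA] unfolding c_def by auto
    qed
    have "SB c = PB" unfolding SB_def aB using cB by (intro sum.cong) auto
    moreover have "ST c = (\<Sum>j<NB. smult (aB j) (TT j))" unfolding ST_def using cB by (intro sum.cong) auto
    moreover have "SA c = R" unfolding SA_def aA using cA by (intro sum.cong) auto
    ultimately have "ff_lincomb c b n = (A, B)" using lc[of c] P unfolding R_def by simp
    then show "\<exists>c. g = ff_lincomb c b n" using g by metis
  qed
  show ?thesis unfolding is_basis_H0_def using part1 part2 part3 by blast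
qed

lemma Fract_pow: "Fract (a::complex poly) b ^ j = Fract (a ^ j) (b ^ j)"
  by (induct j) (simp_all add: One_fract_def)

lemma xbp: "xb \<beta> ^ j = Fract ([:-\<beta>,1:] ^ j) 1"
  by (simp add: xb_def ratfun_of_poly_def Fract_pow)

lemma ifp: "inverse (ratfun_of_poly f) ^ k = Fract 1 (f ^ k)"
  by (simp add: ratfun_of_poly_def Fract_pow)

lemma ifp1: "inverse (ratfun_of_poly f) = Fract 1 f"
  by (simp add: ratfun_of_poly_def)

lemma cancel_f: "(f::complex poly) \<noteq> 0 \<Longrightarrow> ratfun_of_poly f * (Fract a 1 * Fract 1 (f ^ Suc m)) = Fract a (f ^ m)"
  using mult_fract_cancel[of f a "f ^ m"] by (simp add: ratfun_of_poly_def)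

lemma idx_un: "{..<a} \<union> (\<lambda>j. a + j) ` {..<b} = {..<(a + b::nat)}"
proof (intro equalityI subsetI)
  fix x assume "x \<in> {..<a+b}"
  then show "x \<in> {..<a} \<union> (\<lambda>j. a + j) ` {..<b}"
    by (cases "x < a") (auto simp: image_iff intro!: bexI[of _ "x - a"])
qed auto

lemma idx_dj: "{..<a} \<inter> (\<lambda>j. a + j) ` {..<b} = ({}::nat set)" by auto

lemma idx_inj: "inj_on (\<lambda>j. (a::nat) + j) S" by (simp add: inj_on_def)

lemma hol_gen:
  assumes f8: "degree f = 8" and sf: "rsquarefree f"
    and eA: "\<And>P. (P \<noteq> 0 \<longrightarrow> int (degree P) + 2 * int q \<le> 8 * int (q div 2)) \<longleftrightarrow> ok NA P"
    and eB: "\<And>P. (P \<noteq> 0 \<longrightarrow> int (degree P) + 4 + 2 * int q \<le> 8 * int ((q + 1) div 2)) \<longleftrightarrow> ok NB P"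
  shows "holo_qdiff f q (A, B) \<longleftrightarrow>
       (\<exists>PA. A = Fract PA (f ^ (q div 2)) \<and> ok NA PA) \<and> (\<exists>PB. B = Fract PB (f ^ ((q + 1) div 2)) \<and> ok NB PB)"
  unfolding holo_char[OF f8 sf] eA eB ..

theorem mainTheorem1:
  fixes f :: "complex poly"
  assumes "degree f = 8" and "rsquarefree f"
  shows
    "(\<forall>\<beta>. is_basis_H0 f 1 3 (\<lambda>j. ff_mult f (xb \<beta> ^ j, 0) (y_inv_pow f 1)))
   \<and> (\<forall>\<beta> T. (if poly f \<beta> = 0 then T = 0
             else (\<exists>Y. Y\<^sup>2 = poly (map_poly fls_const f) (fls_const \<beta> + fls_X)
                      \<and> T = taylor4 \<beta> Y)) \<longrightarrow>
        is_basis_H0 f 2 6 (\<lambda>j. if j \<le> 4 then ff_mult f (xb \<beta> ^ j, 0) (y_inv_pow f 2)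
                               else ff_mult f (- ratfun_of_poly T, 1) (y_inv_pow f 2)))
   \<and> (\<forall>q \<beta>. q \<ge> 2 \<and> poly f \<beta> = 0 \<longrightarrow>
        is_basis_H0 f q (4 * q - 2)
          (\<lambda>j. if j \<le> 2 * q then ff_mult f (xb \<beta> ^ j, 0) (y_inv_pow f q)
               else ff_mult f (0, xb \<beta> ^ (j - (2 * q + 1))) (y_inv_pow f q)))"
proof (intro conjI allI impI)
  note f8 = assms(1) and sf = assms(2)
  have fnz: "f \<noteq> 0" using f_facts[OF f8 sf] by auto
  fix \<beta> :: complex
  show "is_basis_H0 f 1 3 (\<lambda>j. ff_mult f (xb \<beta> ^ j, 0) (y_inv_pow f 1))"
  proof (rule GEN[where KA=0 and NA=0 and KB=1 and NB=3 and iA=id and iB=id and \<beta>=\<beta> and TT="\<lambda>_. 0"])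
    show "f \<noteq> 0" by (rule fnz)
    show "holo_qdiff f 1 (A, B) \<longleftrightarrow> (\<exists>PA. A = Fract PA (f ^ 0) \<and> ok 0 PA) \<and> (\<exists>PB. B = Fract PB (f ^ 1) \<and> ok 3 PB)" for A B
    proof -
      have eA: "(P \<noteq> 0 \<longrightarrow> int (degree P) + 2 * int 1 \<le> 8 * int (1 div 2)) \<longleftrightarrow> ok 0 P" for P
        unfolding ok_def by auto
      have eB: "(P \<noteq> 0 \<longrightarrow> int (degree P) + 4 + 2 * int 1 \<le> 8 * int ((1 + 1) div 2)) \<longleftrightarrow> ok 3 P" for P
        unfolding ok_def by auto
      show ?thesis using hol_gen[OF f8 sf eA eB, of A B] by simp
    qed
  qed (auto simp: ff_mult_def y_inv_pow_def xbp ifp ifp1 Fract_zero_num)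
next
  note f8 = assms(1) and sf = assms(2)
  have fnz: "f \<noteq> 0" using f_facts[OF f8 sf] by auto
  fix \<beta> :: complex and T :: "complex poly"
  assume hT: "if poly f \<beta> = 0 then T = 0
             else (\<exists>Y. Y\<^sup>2 = poly (map_poly fls_const f) (fls_const \<beta> + fls_X) \<and> T = taylor4 \<beta> Y)"
  have okT: "ok 5 T"
  proof (cases "poly f \<beta> = 0")
    case True then show ?thesis using hT by simp
  next
    case False
    then obtain Y where "T = taylor4 \<beta> Y" using hT by auto
    moreover have "ok 5 (taylor4 \<beta> Y)" unfolding taylor4_def
      by (intro ok_sum ok_smult) (auto simp: ok_def degree_power_eq)
    ultimately show ?thesis by simp
  qed
  show "is_basis_H0 f 2 6 (\<lambda>j. if j \<le> 4 then ff_mult f (xb \<beta> ^ j, 0) (y_inv_pow f 2)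
                               else ff_mult f (- ratfun_of_poly T, 1) (y_inv_pow f 2))"
  proof (rule GEN[where KA=1 and NA=5 and KB=1 and NB=1 and iA=id and iB="\<lambda>j. 5 + j" and \<beta>=\<beta> and TT="\<lambda>_. - T"])
    show "f \<noteq> 0" by (rule fnz)
    show "holo_qdiff f 2 (A, B) \<longleftrightarrow> (\<exists>PA. A = Fract PA (f ^ 1) \<and> ok 5 PA) \<and> (\<exists>PB. B = Fract PB (f ^ 1) \<and> ok 1 PB)" for A B
    proof -
      have eA: "(P \<noteq> 0 \<longrightarrow> int (degree P) + 2 * int 2 \<le> 8 * int (2 div 2)) \<longleftrightarrow> ok 5 P" for P
        unfolding ok_def by auto
      have eB: "(P \<noteq> 0 \<longrightarrow> int (degree P) + 4 + 2 * int 2 \<le> 8 * int ((2 + 1) div 2)) \<longleftrightarrow> ok 1 P" for P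
        unfolding ok_def by auto
      show ?thesis using hol_gen[OF f8 sf eA eB, of A B] by simp
    qed
    show "ok 5 (- T)" for j using okT by (rule ok_uminus)
  qed (auto simp: ff_mult_def y_inv_pow_def xbp ifp ifp1 Fract_zero_num ratfun_of_poly_def)
next
  note f8 = assms(1) and sf = assms(2)
  have fnz: "f \<noteq> 0" using f_facts[OF f8 sf] by auto
  fix q :: nat and \<beta> :: complex
  assume q: "2 \<le> q \<and> poly f \<beta> = 0"
  show "is_basis_H0 f q (4 * q - 2)
          (\<lambda>j. if j \<le> 2 * q then ff_mult f (xb \<beta> ^ j, 0) (y_inv_pow f q)
               else ff_mult f (0, xb \<beta> ^ (j - (2 * q + 1))) (y_inv_pow f q))"
  proof (cases "even q")
    case True
    then obtain m where m: "q = 2 * m" by blast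
    show ?thesis
    proof (rule GEN[where KA=m and NA="2*q+1" and KB=m and NB="2*q-3" and iA=id and iB="\<lambda>j. 2*q+1+j"
          and \<beta>=\<beta> and TT="\<lambda>_. 0"])
      show "f \<noteq> 0" by (rule fnz)
      show "holo_qdiff f q (A, B) \<longleftrightarrow> (\<exists>PA. A = Fract PA (f ^ m) \<and> ok (2*q+1) PA) \<and>
          (\<exists>PB. B = Fract PB (f ^ m) \<and> ok (2*q-3) PB)" for A B
      proof -
        have d: "q div 2 = m" "(q + 1) div 2 = m" using m by auto
        have eA: "(P \<noteq> 0 \<longrightarrow> int (degree P) + 2 * int q \<le> 8 * int (q div 2)) \<longleftrightarrow> ok (2*q+1) P" for P
          unfolding ok_def d using m by auto
        have eB: "(P \<noteq> 0 \<longrightarrow> int (degree P) + 4 + 2 * int q \<le> 8 * int ((q + 1) div 2)) \<longleftrightarrow> ok (2*q-3) P" for P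
          unfolding ok_def d using m q by auto
        show ?thesis using hol_gen[OF f8 sf eA eB, of A B] d by simp
      qed
      show "id ` {..<2*q+1} \<union> (\<lambda>j. 2*q+1+j) ` {..<2*q-3} = {..<4 * q - 2}"
      proof -
        have e: "2*q+1+(2*q-3) = 4*q-2" using q by linarith
        show ?thesis using idx_un[of "2*q+1" "2*q-3"] unfolding e by simp
      qed
      show "id ` {..<2*q+1} \<inter> (\<lambda>j. 2*q+1+j) ` {..<2*q-3} = {}"
        using idx_dj[of "2*q+1" "2*q-3"] by simp
      show "inj_on (\<lambda>j. 2*q+1+j) {..<2*q-3}" by (rule idx_inj)
    qed (use m q in \<open>auto simp: ff_mult_def y_inv_pow_def xbp ifp Fract_pow Fract_zero_num\<close>)
  next
    case False
    then obtain m where m: "q = 2 * m + 1" using oddE by blast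
    show ?thesis
    proof (rule GEN[where KA=m and NA="2*q-3" and KB="m+1" and NB="2*q+1" and iA="\<lambda>j. 2*q+1+j" and iB=id
          and \<beta>=\<beta> and TT="\<lambda>_. 0"])
      show "f \<noteq> 0" by (rule fnz)
      show "holo_qdiff f q (A, B) \<longleftrightarrow> (\<exists>PA. A = Fract PA (f ^ m) \<and> ok (2*q-3) PA) \<and>
          (\<exists>PB. B = Fract PB (f ^ (m+1)) \<and> ok (2*q+1) PB)" for A B
      proof -
        have d: "q div 2 = m" "(q + 1) div 2 = m + 1" using m by auto
        have eA: "(P \<noteq> 0 \<longrightarrow> int (degree P) + 2 * int q \<le> 8 * int (q div 2)) \<longleftrightarrow> ok (2*q-3) P" for P
          unfolding ok_def d using m q by auto
        have eB: "(P \<noteq> 0 \<longrightarrow> int (degree P) + 4 + 2 * int q \<le> 8 * int ((q + 1) div 2)) \<longleftrightarrow> ok (2*q+1) P" for P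
          unfolding ok_def d using m by auto
        show ?thesis using hol_gen[OF f8 sf eA eB, of A B] d by simp
      qed
      show "(\<lambda>j. 2*q+1+j) ` {..<2*q-3} \<union> id ` {..<2*q+1} = {..<4 * q - 2}"
      proof -
        have e: "2*q+1+(2*q-3) = 4*q-2" using q by linarith
        show ?thesis using idx_un[of "2*q+1" "2*q-3"] unfolding e by (simp add: Un_commute)
      qed
      show "(\<lambda>j. 2*q+1+j) ` {..<2*q-3} \<inter> id ` {..<2*q+1} = {}"
        using idx_dj[of "2*q+1" "2*q-3"] by auto
      show "inj_on (\<lambda>j. 2*q+1+j) {..<2*q-3}" by (rule idx_inj)
    qed (use m q fnz in \<open>auto simp: ff_mult_def y_inv_pow_def xbp ratfun_of_poly_def Fract_pow Fract_zero_num mult_fract_cancel[OF fnz]\<close>)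
  qed
qed

end
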